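(* Let $G$ be a td-group acting isometrically, properly, cocompactly and smoothly on a locally compact CAT(0)-space $X$. Let $\mathcal{A}$ be a collection of closed convex subspaces of $X$ such that: (a) for all $A,A'\in\mathcal{A}$ there is $g\in G$ with $g(A)=A'$ and $g|_{A\cap A'}=\mathrm{id}_{A\cap A'}$; (b) for every $A\in\mathcal{A}$ the quotient $\Gamma_A=\{g\in G\mid gA=A\}/\{g\in G\mid g|_A=\mathrm{id}_A\}$ is discrete; (c) for any $x,y\in X$ there is $A\in\mathcal{A}$ with $x,y\in A$. Then for every $A\in\mathcal{A}$ we have $G\cdot \mathrm{FS}(A)=\mathrm{FS}(X)$.
   Context: A td-group is a topological group in which the identity admits a countable neighborhood basis of compact open subgroups. An action is smooth if all isotropy groups are open. A generalized geodesic in $X$ is a continuous map $c\colon\mathbb{R}\to X$ for which there is an open interval $U\subseteq\mathbb{R}$ (possibly unbounded, possibly all of $\mathbb{R}$) such that $c|_U$ is an isometric embedding and $c|_{\mathbb{R}\setminus U}$ is locally constant. The flow space $\mathrm{FS}(X)$ is the space of all generalized geodesics with metric $d_{\mathrm{FS}}(c,c')=\int_{\mathbb{R}} d_X(c(t),c'(t))\,2e^{-|t|}\,dt$, and $G$ acts by $(gc)(t)=g(c(t))$. For $A\subseteq X$, $\mathrm{FS}(A)\subseteq\mathrm{FS}(X)$ is the subspace of generalized geodesics with image in $A$. $\Gamma_A$ carries the quotient topology. *)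

theory Defs
  imports "HOL-Analysis.Analysis" "HOL-Algebra.Coset"
begin

definition topological_group :: "('g, 'm) monoid_scheme \<Rightarrow> 'g topology \<Rightarrow> bool" where
  "topological_group G T \<longleftrightarrow> group G \<and> topspace T = carrier G \<and>
     continuous_map (prod_topology T T) T (\<lambda>(x, y). x \<otimes>\<^bsub>G\<^esub> y) \<and>
     continuous_map T T (\<lambda>x. inv\<^bsub>G\<^esub> x)"

definition td_group :: "('g, 'm) monoid_scheme \<Rightarrow> 'g topology \<Rightarrow> bool" where
  "td_group G T \<longleftrightarrow> topological_group G T \<and>
     (\<exists>U :: nat \<Rightarrow> 'g set.
        (\<forall>n. subgroup (U n) G \<and> compactin T (U n) \<and> openin T (U n)) \<and>
        (\<forall>W. openin T W \<and> \<one>\<^bsub>G\<^esub> \<in> W \<longrightarrow> (\<exists>n. U n \<subseteq> W)))"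

definition group_act :: "('g, 'm) monoid_scheme \<Rightarrow> ('g \<Rightarrow> 'x \<Rightarrow> 'x) \<Rightarrow> bool" where
  "group_act G act \<longleftrightarrow> (\<forall>x. act \<one>\<^bsub>G\<^esub> x = x) \<and>
     (\<forall>g\<in>carrier G. \<forall>h\<in>carrier G. \<forall>x. act (g \<otimes>\<^bsub>G\<^esub> h) x = act g (act h x))"

definition isometric_act :: "('g, 'm) monoid_scheme \<Rightarrow> ('g \<Rightarrow> 'x::metric_space \<Rightarrow> 'x) \<Rightarrow> bool" where
  "isometric_act G act \<longleftrightarrow> group_act G act \<and>
     (\<forall>g\<in>carrier G. \<forall>x y. dist (act g x) (act g y) = dist x y)"

definition proper_act :: "('g, 'm) monoid_scheme \<Rightarrow> 'g topology \<Rightarrow> ('g \<Rightarrow> 'x::metric_space \<Rightarrow> 'x) \<Rightarrow> bool" where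
  "proper_act G T act \<longleftrightarrow>
     continuous_map (prod_topology T euclidean) euclidean (\<lambda>(g, x). act g x) \<and>
     (\<forall>K. compact K \<longrightarrow> compactin T {g \<in> carrier G. act g ` K \<inter> K \<noteq> {}})"

definition cocompact_act :: "('g, 'm) monoid_scheme \<Rightarrow> ('g \<Rightarrow> 'x::topological_space \<Rightarrow> 'x) \<Rightarrow> bool" where
  "cocompact_act G act \<longleftrightarrow> (\<exists>K. compact K \<and> (\<Union>g\<in>carrier G. act g ` K) = UNIV)"

definition smooth_act :: "('g, 'm) monoid_scheme \<Rightarrow> 'g topology \<Rightarrow> ('g \<Rightarrow> 'x \<Rightarrow> 'x) \<Rightarrow> bool" where
  "smooth_act G T act \<longleftrightarrow> (\<forall>x. openin T {g \<in> carrier G. act g x = x})"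

definition isometric_on :: "real set \<Rightarrow> (real \<Rightarrow> 'x::metric_space) \<Rightarrow> bool" where
  "isometric_on S f \<longleftrightarrow> (\<forall>s\<in>S. \<forall>t\<in>S. dist (f s) (f t) = dist s t)"

definition geodesic_from :: "(real \<Rightarrow> 'x::metric_space) \<Rightarrow> 'x \<Rightarrow> 'x \<Rightarrow> bool" where
  "geodesic_from \<gamma> x y \<longleftrightarrow> \<gamma> 0 = x \<and> \<gamma> (dist x y) = y \<and> isometric_on {0..dist x y} \<gamma>"

definition geodesic_space :: "'x::metric_space itself \<Rightarrow> bool" where
  "geodesic_space _ \<longleftrightarrow> (\<forall>x y :: 'x. \<exists>\<gamma>. geodesic_from \<gamma> x y)"

text \<open>CAT(0): geodesic, and for every geodesic triangle, the distance between two points on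
  the triangle is at most the distance of the comparison points in a Euclidean comparison
  triangle (Euclidean plane = complex numbers).  Two points of a triangle always lie on two
  sides sharing a vertex x (or on a single side, where the inequality is an equality).\<close>
definition CAT0 :: "'x::metric_space itself \<Rightarrow> bool" where
  "CAT0 TYPE('x) \<longleftrightarrow> geodesic_space TYPE('x) \<and>
     (\<forall>(x::'x) y z \<gamma>1 \<gamma>2 s t (a::complex) b c.
        geodesic_from \<gamma>1 x y \<and> geodesic_from \<gamma>2 x z \<and>
        s \<in> {0..dist x y} \<and> t \<in> {0..dist x z} \<and>
        dist a b = dist x y \<and> dist a c = dist x z \<and> dist b c = dist y z \<longrightarrow>
        dist (\<gamma>1 s) (\<gamma>2 t) \<le>
          dist (a + of_real (s / dist a b) * (b - a)) (a + of_real (t / dist a c) * (c - a)))"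

definition convex_subspace :: "'x::metric_space set \<Rightarrow> bool" where
  "convex_subspace A \<longleftrightarrow> (\<forall>x\<in>A. \<forall>y\<in>A. \<forall>\<gamma>. geodesic_from \<gamma> x y \<longrightarrow> \<gamma> ` {0..dist x y} \<subseteq> A)"

definition locally_constant_on :: "real set \<Rightarrow> (real \<Rightarrow> 'x) \<Rightarrow> bool" where
  "locally_constant_on S f \<longleftrightarrow> (\<forall>t\<in>S. \<exists>e>0. \<forall>s\<in>S. \<bar>s - t\<bar> < e \<longrightarrow> f s = f t)"

definition generalized_geodesic :: "(real \<Rightarrow> 'x::metric_space) \<Rightarrow> bool" where
  "generalized_geodesic c \<longleftrightarrow> continuous_on UNIV c \<and>
     (\<exists>a b :: ereal. a \<le> b \<and>
        (let U = {t. a < ereal t \<and> ereal t < b} in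
           isometric_on U c \<and> locally_constant_on (- U) c))"

definition FS :: "'x::metric_space set \<Rightarrow> (real \<Rightarrow> 'x) set" where
  "FS A = {c. generalized_geodesic c \<and> range c \<subseteq> A}"

definition orbit_set :: "('g, 'm) monoid_scheme \<Rightarrow> ('g \<Rightarrow> 'x \<Rightarrow> 'x) \<Rightarrow> (real \<Rightarrow> 'x) set \<Rightarrow> (real \<Rightarrow> 'x) set" where
  "orbit_set G act C = {(\<lambda>t. act g (c t)) | g c. g \<in> carrier G \<and> c \<in> C}"

definition setwise_stab :: "('g, 'm) monoid_scheme \<Rightarrow> ('g \<Rightarrow> 'x \<Rightarrow> 'x) \<Rightarrow> 'x set \<Rightarrow> 'g set" where
  "setwise_stab G act A = {g \<in> carrier G. act g ` A = A}"

definition pointwise_fix :: "('g, 'm) monoid_scheme \<Rightarrow> ('g \<Rightarrow> 'x \<Rightarrow> 'x) \<Rightarrow> 'x set \<Rightarrow> 'g set" where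
  "pointwise_fix G act A = {g \<in> carrier G. \<forall>x\<in>A. act g x = x}"

definition quotient_topology :: "'a topology \<Rightarrow> ('a \<Rightarrow> 'b) \<Rightarrow> 'b topology" where
  "quotient_topology X q =
     topology (\<lambda>V. V \<subseteq> q ` topspace X \<and> openin X {x \<in> topspace X. q x \<in> V})"

definition Gamma_discrete :: "('g, 'm) monoid_scheme \<Rightarrow> 'g topology \<Rightarrow> ('g \<Rightarrow> 'x \<Rightarrow> 'x) \<Rightarrow> 'x set \<Rightarrow> bool" where
  "Gamma_discrete G T act A \<longleftrightarrow>
     (let S = setwise_stab G act A; q = (\<lambda>g. pointwise_fix G act A #>\<^bsub>G\<^esub> g) in
        quotient_topology (subtopology T S) q = discrete_topology (q ` S))"

end

theory Submission
  imports Defs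
begin


lemma lc_const:
  fixes f :: "real \<Rightarrow> 'x"
  assumes lc: "locally_constant_on S f" and L: "is_interval L" "L \<subseteq> S" "s \<in> L" "t \<in> L"
  shows "f s = f t"
proof -
  have "f constant_on L"
  proof (rule locally_constant_imp_constant)
    show "connected L" using L(1) is_interval_connected by blast
    fix a assume "a \<in> L"
    then obtain e where e: "e > 0" "\<forall>s\<in>S. \<bar>s - a\<bar> < e \<longrightarrow> f s = f a"
      using lc L(2) unfolding locally_constant_on_def by blast
    show "\<exists>T. openin (top_of_set L) T \<and> a \<in> T \<and> (\<forall>x\<in>T. f x = f a)"
      apply (rule exI[of _ "L \<inter> ball a e"])
proof (intro conjI ballI)
        show "openin (top_of_set L) (L \<inter> ball a e)" by (rule openin_open_Int) simp
        show "a \<in> L \<inter> ball a e" using \<open>a \<in> L\<close> e(1) by simp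
        fix x assume x: "x \<in> L \<inter> ball a e"
        then have "x \<in> S" "\<bar>x - a\<bar> < e" using L(2) by (auto simp: dist_real_def abs_minus_commute)
        then show "f x = f a" using e(2) by blast
      qed
  qed
  then show ?thesis using L unfolding constant_on_def by metis
qed

lemma gg_iso_closed:
  fixes c :: "real \<Rightarrow> 'x::metric_space" and a b :: ereal
  assumes cont: "continuous_on UNIV c" and iso: "isometric_on {t. a < ereal t \<and> ereal t < b} c"
  shows "isometric_on {t. a \<le> ereal t \<and> ereal t \<le> b} c"
  unfolding isometric_on_def
proof (intro ballI)
  fix s t assume s: "s \<in> {t. a \<le> ereal t \<and> ereal t \<le> b}" and t: "t \<in> {t. a \<le> ereal t \<and> ereal t \<le> b}"
  show "dist (c s) (c t) = dist s t"
  proof (cases "s = t")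
    case True then show ?thesis by simp
  next
    case False
    let ?U = "{t. a < ereal t \<and> ereal t < b}"
    have ab: "a < b"
    proof (rule ccontr)
      assume "\<not> a < b"
      then have "b \<le> a" by simp
      then have "ereal s = ereal t" using s t by (metis (mono_tags) mem_Collect_eq antisym order_trans)
      then show False using False by simp
    qed
    have cl: "x \<in> closure ?U" if x: "a \<le> ereal x" "ereal x \<le> b" for x
    proof (cases "a < ereal x \<and> ereal x < b")
      case True then have "x \<in> ?U" by simp
      then show ?thesis by (meson closure_subset subsetD)
    next
      case False
      show ?thesis unfolding closure_approachable
      proof (intro allI impI)
        fix e :: real assume e: "e > 0"
        show "\<exists>y\<in>?U. dist y x < e"
        proof (cases "ereal x = a")
          case True
          have "ereal x < min b (ereal (x + e))" using ab True e by auto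
          then obtain z where z: "ereal x < ereal z" "ereal z < min b (ereal (x + e))"
            using ereal_dense2 by blast
          then show ?thesis using True by (intro bexI[of _ z]) (auto simp: dist_real_def)
        next
          case F2: False
          then have xb: "ereal x = b" using False x by auto
          have "max a (ereal (x - e)) < ereal x" using ab xb e by auto
          then obtain z where z: "max a (ereal (x - e)) < ereal z" "ereal z < ereal x"
            using ereal_dense2 by blast
          then show ?thesis using xb by (intro bexI[of _ z]) (auto simp: dist_real_def)
        qed
      qed
    qed
    have "(s, t) \<in> closure ?U \<times> closure ?U" using cl s t by auto
    also have "\<dots> = closure (?U \<times> ?U)" by (simp add: closure_Times)
    also have "\<dots> \<subseteq> {p. dist (c (fst p)) (c (snd p)) = dist (fst p) (snd p)}"
    proof (rule closure_minimal)
      show "?U \<times> ?U \<subseteq> {p. dist (c (fst p)) (c (snd p)) = dist (fst p) (snd p)}"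
        using iso unfolding isometric_on_def by auto
      show "closed {p. dist (c (fst p)) (c (snd p)) = dist (fst p) (snd p)}"
      proof (rule closed_Collect_eq)
        have c1: "continuous_on UNIV (\<lambda>x. c (fst x))"
          by (rule continuous_on_compose2[OF cont]) (auto intro: continuous_intros)
        have c2: "continuous_on UNIV (\<lambda>x. c (snd x))"
          by (rule continuous_on_compose2[OF cont]) (auto intro: continuous_intros)
        show "continuous_on UNIV (\<lambda>p. dist (c (fst p)) (c (snd p)))"
          using c1 c2 by (intro continuous_intros)
        show "continuous_on UNIV (\<lambda>p::real\<times>real. dist (fst p) (snd p))"
          by (intro continuous_intros)
      qed
    qed
    finally show ?thesis by simp
  qed
qed



lemma gg_segment:
  fixes c :: "real \<Rightarrow> 'x::metric_space"
  assumes gg: "generalized_geodesic c" and cv: "convex_subspace B"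
    and u: "c u \<in> B" and v: "c v \<in> B" and ut: "u \<le> t" and tv: "t \<le> v"
  shows "c t \<in> B"
proof -
  obtain a b :: ereal where ab: "a \<le> b"
    and iso: "isometric_on {t. a < ereal t \<and> ereal t < b} c"
    and lcon: "locally_constant_on (- {t. a < ereal t \<and> ereal t < b}) c"
    and cont: "continuous_on UNIV c"
    using gg unfolding generalized_geodesic_def Let_def by blast
  let ?U = "{t. a < ereal t \<and> ereal t < b}"
  let ?J = "{t. a \<le> ereal t \<and> ereal t \<le> b}"
  have isoJ: "isometric_on ?J c" by (rule gg_iso_closed[OF cont iso])
  have Lint: "is_interval {t. ereal t \<le> a}"
    unfolding is_interval_1 by (simp, meson ereal_less_eq(3) order_trans)
  have Rint: "is_interval {t. b \<le> ereal t}"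
    unfolding is_interval_1 by (simp, meson ereal_less_eq(3) order_trans)
  have LU: "{t. ereal t \<le> a} \<subseteq> - ?U" by (auto simp: not_less)
  have RU: "{t. b \<le> ereal t} \<subseteq> - ?U" by (auto simp: not_less)
  consider "ereal t \<le> a" | "b \<le> ereal t" | "a < ereal t" "ereal t < b" by (meson not_less)
  then show ?thesis
  proof cases
    case 1
    have "ereal u \<le> ereal t" using ut by simp
    then have "ereal u \<le> a" using 1 by (rule order_trans)
    then have "c t = c u" using 1 by (intro lc_const[OF lcon Lint LU]) auto
    then show ?thesis using u by simp
  next
    case 2
    have "ereal t \<le> ereal v" using tv by simp
    with 2 have "b \<le> ereal v" by (rule order_trans)
    then have "c t = c v" using 2 by (intro lc_const[OF lcon Rint RU]) auto
    then show ?thesis using v by simp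
  next
    case 3
    define p where "p = (if a < ereal u then u else real_of_ereal a)"
    define q where "q = (if ereal v < b then v else real_of_ereal b)"
    have p: "p \<in> ?J \<and> p \<le> t \<and> c p = c u"
    proof (cases "a < ereal u")
      case True
      have "ereal u \<le> ereal t" using ut by simp
      then have "ereal u < b" using 3(2) by (rule order.strict_trans1)
      then show ?thesis using True ut unfolding p_def by (simp add: less_imp_le)
    next
      case False
      then have ua: "ereal u \<le> a" by simp
      have fin: "ereal (real_of_ereal a) = a" using ua 3(1) by (cases a) auto
      have pa: "ereal p = a" using False fin unfolding p_def by simp
      have "c u = c p" using ua pa by (intro lc_const[OF lcon Lint LU]) auto
      moreover have "p \<le> t" proof -
        have "ereal p < ereal t" using pa 3(1) by simp
        then show ?thesis by simp
      qed
      moreover have "p \<in> ?J" using pa ab by simp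
      ultimately show ?thesis by simp
    qed
    have q: "q \<in> ?J \<and> t \<le> q \<and> c q = c v"
    proof (cases "ereal v < b")
      case True
      have "ereal t \<le> ereal v" using tv by simp
      with 3(1) have "a < ereal v" by (rule order.strict_trans2)
      then show ?thesis using True tv unfolding q_def by (simp add: less_imp_le)
    next
      case False
      then have vb: "b \<le> ereal v" by simp
      have fin: "ereal (real_of_ereal b) = b" using vb 3(2) by (cases b) auto
      have qb: "ereal q = b" using False fin unfolding q_def by simp
      have "c v = c q" using vb qb by (intro lc_const[OF lcon Rint RU]) auto
      moreover have "t \<le> q" proof -
        have "ereal t < ereal q" using qb 3(2) by simp
        then show ?thesis by simp
      qed
      moreover have "q \<in> ?J" using qb ab by simp
      ultimately show ?thesis by simp
    qed
    have inJ: "x \<in> ?J" if "p \<le> x" "x \<le> q" for x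
    proof -
      have "a \<le> ereal p" using p by simp
      moreover have "ereal p \<le> ereal x" using that(1) by simp
      ultimately have "a \<le> ereal x" by (rule order_trans)
      moreover have "ereal x \<le> b"
      proof -
        have "ereal q \<le> b" using q by simp
        moreover have "ereal x \<le> ereal q" using that(2) by simp
        ultimately show ?thesis by (rule order_trans[rotated])
      qed
      ultimately show ?thesis by simp
    qed
    have pq: "p \<le> q" using p q by linarith
    have dpq: "dist (c p) (c q) = q - p"
    proof -
      have "p \<in> ?J" "q \<in> ?J" using p q by blast+
      then have "dist (c p) (c q) = dist p q" using isoJ unfolding isometric_on_def by blast
      then show ?thesis using pq by (simp add: dist_real_def)
    qed
    define \<gamma> where "\<gamma> = (\<lambda>r. c (p + r))"
    have geo: "geodesic_from \<gamma> (c p) (c q)"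
      unfolding geodesic_from_def
    proof (intro conjI)
      show "\<gamma> 0 = c p" unfolding \<gamma>_def by simp
      show "\<gamma> (dist (c p) (c q)) = c q" unfolding \<gamma>_def dpq by simp
      show "isometric_on {0..dist (c p) (c q)} \<gamma>"
        unfolding isometric_on_def
      proof (intro ballI)
        fix r r' assume r: "r \<in> {0..dist (c p) (c q)}" and r': "r' \<in> {0..dist (c p) (c q)}"
        have "p + r \<in> ?J" using r dpq by (intro inJ) simp_all
        moreover have "p + r' \<in> ?J" using r' dpq by (intro inJ) simp_all
        ultimately have "p + r \<in> ?J" "p + r' \<in> ?J" by blast+
        then have "dist (c (p + r)) (c (p + r')) = dist (p + r) (p + r')"
          using isoJ unfolding isometric_on_def by blast
        then show "dist (\<gamma> r) (\<gamma> r') = dist r r'" unfolding \<gamma>_def by (simp add: dist_real_def)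
      qed
    qed
    have "c p \<in> B" "c q \<in> B" using p q u v by auto
    then have "\<gamma> ` {0..dist (c p) (c q)} \<subseteq> B" using cv geo unfolding convex_subspace_def by blast
    moreover have "t - p \<in> {0..dist (c p) (c q)}" using p q dpq by simp
    moreover have "\<gamma> (t - p) = c t" unfolding \<gamma>_def by simp
    ultimately show ?thesis by (metis image_eqI subsetD)
  qed
qed



lemma act_cancel:
  assumes "group G" "group_act G act" "g \<in> carrier G"
  shows "act (inv\<^bsub>G\<^esub> g) (act g y) = y"
proof -
  have "act (inv\<^bsub>G\<^esub> g) (act g y) = act (inv\<^bsub>G\<^esub> g \<otimes>\<^bsub>G\<^esub> g) y"
    using assms unfolding group_act_def by (simp add: group.inv_closed)
  also have "\<dots> = y" using assms unfolding group_act_def by (simp add: group.l_inv)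
  finally show ?thesis .
qed

lemma gg_translate:
  assumes isom: "isometric_act G act" and g: "g \<in> carrier G" and gg: "generalized_geodesic c"
  shows "generalized_geodesic (\<lambda>t. act g (c t))"
proof -
  have dg: "\<And>x y. dist (act g x) (act g y) = dist x y" using isom g unfolding isometric_act_def by blast
  obtain a b :: ereal where ab: "a \<le> b"
    and iso: "isometric_on {t. a < ereal t \<and> ereal t < b} c"
    and lcon: "locally_constant_on (- {t. a < ereal t \<and> ereal t < b}) c"
    and cont: "continuous_on UNIV c"
    using gg unfolding generalized_geodesic_def Let_def by blast
  have cg: "continuous_on UNIV (act g)"
    unfolding continuous_on_iff using dg by (metis UNIV_I)
  have "continuous_on UNIV (\<lambda>t. act g (c t))"
    by (rule continuous_on_compose2[OF cg cont]) simp
  moreover have "isometric_on {t. a < ereal t \<and> ereal t < b} (\<lambda>t. act g (c t))"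
    using iso dg unfolding isometric_on_def by simp
  moreover have "locally_constant_on (- {t. a < ereal t \<and> ereal t < b}) (\<lambda>t. act g (c t))"
    unfolding locally_constant_on_def
  proof (intro ballI)
    fix t assume "t \<in> - {t. a < ereal t \<and> ereal t < b}"
    then obtain e where "e > 0" "\<forall>s\<in>- {t. a < ereal t \<and> ereal t < b}. \<bar>s - t\<bar> < e \<longrightarrow> c s = c t"
      using lcon unfolding locally_constant_on_def by blast
    then show "\<exists>e>0. \<forall>s\<in>- {t. a < ereal t \<and> ereal t < b}. \<bar>s - t\<bar> < e \<longrightarrow> act g (c s) = act g (c t)"
      by (intro exI[of _ e] conjI ballI impI) simp_all
  qed
  ultimately show ?thesis using ab unfolding generalized_geodesic_def Let_def by blast
qed



theorem lemma2p3:
  fixes G :: "('g, 'm) monoid_scheme" and T :: "'g topology"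
    and act :: "'g \<Rightarrow> 'x::metric_space \<Rightarrow> 'x"
    and \<A> :: "'x set set"
  assumes td: "td_group G T"
    and isom: "isometric_act G act"
    and proper: "proper_act G T act"
    and cocpt: "cocompact_act G act"
    and smooth: "smooth_act G T act"
    and lc: "locally_compact_space (euclidean :: 'x topology)"
    and cat0: "CAT0 TYPE('x)"
    and closed_convex: "\<forall>A\<in>\<A>. closed A \<and> convex_subspace A"
    and a: "\<forall>A\<in>\<A>. \<forall>A'\<in>\<A>. \<exists>g\<in>carrier G. act g ` A = A' \<and> (\<forall>x\<in>A \<inter> A'. act g x = x)"
    and b: "\<forall>A\<in>\<A>. Gamma_discrete G T act A"
    and c: "\<forall>x y. \<exists>A\<in>\<A>. x \<in> A \<and> y \<in> A"
  shows "\<forall>A\<in>\<A>. orbit_set G act (FS A) = FS (UNIV :: 'x set)"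
proof
  have grp: "group G" and topT: "topspace T = carrier G"
    and invc: "continuous_map T T (\<lambda>x. inv\<^bsub>G\<^esub> x)"
    using td unfolding td_group_def topological_group_def by blast+
  have gact: "group_act G act" using isom unfolding isometric_act_def by blast
  have pc: "continuous_map (prod_topology T euclidean) euclidean (\<lambda>(g, x). act g x)"
    and pK: "\<And>K. compact K \<Longrightarrow> compactin T {g \<in> carrier G. act g ` K \<inter> K \<noteq> {}}"
    using proper unfolding proper_act_def by blast+
  have actc: "continuous_map T euclidean (\<lambda>g. act (inv\<^bsub>G\<^esub> g) y)" for y
  proof -
    have "continuous_map T (prod_topology T euclidean) (\<lambda>g. (g, y))"
      by (intro continuous_map_pairedI continuous_map_id) simp_all
    then have "continuous_map T euclidean ((\<lambda>(g, x). act g x) \<circ> (\<lambda>g. (g, y)))"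
      using pc by (rule continuous_map_compose)
    then have "continuous_map T euclidean (\<lambda>g. act g y)" by (simp add: o_def)
    with invc have "continuous_map T euclidean ((\<lambda>g. act g y) \<circ> (\<lambda>x. inv\<^bsub>G\<^esub> x))"
      by (rule continuous_map_compose)
    then show ?thesis by (simp add: o_def)
  qed
  fix A assume A: "A \<in> \<A>"
  show "orbit_set G act (FS A) = FS UNIV"
  proof
    show "orbit_set G act (FS A) \<subseteq> FS UNIV"
      unfolding orbit_set_def FS_def using gg_translate[OF isom] by blast
  next
    show "FS UNIV \<subseteq> orbit_set G act (FS A)"
    proof
      fix c0 :: "real \<Rightarrow> 'x" assume "c0 \<in> FS UNIV"
      then have gg: "generalized_geodesic c0" unfolding FS_def by blast
      obtain An where An: "\<And>n::nat. An n \<in> \<A> \<and> c0 (- real n) \<in> An n \<and> c0 (real n) \<in> An n"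
      proof -
        have "\<forall>n::nat. \<exists>B. B \<in> \<A> \<and> c0 (- real n) \<in> B \<and> c0 (real n) \<in> B" using c by blast
        then obtain An where "\<forall>n::nat. An n \<in> \<A> \<and> c0 (- real n) \<in> An n \<and> c0 (real n) \<in> An n"
          by (rule choice[THEN exE])
        then show ?thesis using that by blast
      qed
      have seg: "c0 t \<in> An n" if "- real n \<le> t" "t \<le> real n" for n t
      proof (rule gg_segment[OF gg])
        show "convex_subspace (An n)" using An closed_convex by blast
      qed (use An that in auto)
      define A0 where "A0 = An 0"
      define p where "p = c0 0"
      have A0: "A0 \<in> \<A>" "closed A0" using An closed_convex unfolding A0_def by blast+
      have pAn: "p \<in> An n" for n unfolding p_def by (rule seg) simp_all
      have "\<forall>n. \<exists>g\<in>carrier G. act g ` A0 = An n \<and> (\<forall>x\<in>A0 \<inter> An n. act g x = x)"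
        using a A0 An by blast
      then obtain gs where gs: "\<And>n. gs n \<in> carrier G" "\<And>n. act (gs n) ` A0 = An n"
        "\<And>n. \<forall>x\<in>A0 \<inter> An n. act (gs n) x = x"
        by metis
      define S where "S = {g \<in> carrier G. act g ` {p} \<inter> {p} \<noteq> {}}"
      have cS: "compactin T S" unfolding S_def by (rule pK) simp
      define X where "X = subtopology T S"
      have topX: "topspace X = S" unfolding X_def S_def by (auto simp: topT)
      define F where "F n = {g \<in> topspace X. \<forall>t\<in>{- real n..real n}. act (inv\<^bsub>G\<^esub> g) (c0 t) \<in> A0}" for n :: nat
      have "(\<Inter>n. F n) \<noteq> {}"
      proof (rule compact_space_imp_nest)
        show "compact_space X" unfolding X_def by (rule compact_space_subtopology[OF cS])
        fix n :: nat
        have Feq: "F n = (\<Inter>t\<in>{- real n..real n}. {g \<in> topspace X. act (inv\<^bsub>G\<^esub> g) (c0 t) \<in> A0})"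
        proof -
          have mem: "real n \<in> {- real n..real n}" by simp
          show ?thesis unfolding F_def using mem by blast
        qed
        show "closedin X (F n)" unfolding Feq
        proof (rule closedin_INT)
          show "{- real n..real n} \<noteq> {}" by simp
          fix t
          have "continuous_map X euclidean (\<lambda>g. act (inv\<^bsub>G\<^esub> g) (c0 t))"
            unfolding X_def by (rule continuous_map_from_subtopology[OF actc])
          then show "closedin X {g \<in> topspace X. act (inv\<^bsub>G\<^esub> g) (c0 t) \<in> A0}"
            by (rule closedin_continuous_map_preimage) (simp add: A0(2) closed_closedin[symmetric])
        qed
        have "gs n \<in> F n"
          unfolding F_def topX
        proof (intro CollectI conjI ballI)
          have "act (gs n) p = p" using gs(3) pAn[of 0] pAn[of n] unfolding A0_def by blast
          then show "gs n \<in> S" unfolding S_def using gs(1) by simp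
          fix t assume t: "t \<in> {- real n..real n}"
          then have "c0 t \<in> An n" using seg by simp
          then obtain y where y: "y \<in> A0" "c0 t = act (gs n) y" using gs(2)[of n] by blast
          then show "act (inv\<^bsub>G\<^esub> gs n) (c0 t) \<in> A0"
            using act_cancel[OF grp gact gs(1)] by simp
        qed
        then show "F n \<noteq> {}" by blast
      next
        show "decseq F" unfolding decseq_def F_def by auto
      qed
      then obtain g where g: "\<And>n. g \<in> F n" by blast
      have gS: "g \<in> carrier G" using g[of 0] unfolding F_def topX S_def by blast
      have gA0: "act (inv\<^bsub>G\<^esub> g) (c0 t) \<in> A0" for t
      proof -
        obtain n :: nat where "\<bar>t\<bar> \<le> real n" using real_arch_simple by blast
        then have "t \<in> {- real n..real n}" by auto
        then show ?thesis using g[of n] unfolding F_def by blast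
      qed
      have "\<exists>h\<in>carrier G. act h ` A0 = A \<and> (\<forall>x\<in>A0 \<inter> A. act h x = x)"
        by (rule a[rule_format, OF A0(1) A])
      then obtain h where h: "h \<in> carrier G" "act h ` A0 = A" by blast
      define k where "k = h \<otimes>\<^bsub>G\<^esub> inv\<^bsub>G\<^esub> g"
      have k: "k \<in> carrier G" unfolding k_def using h gS grp by (simp add: group.inv_closed group.subgroup_self subgroup.m_closed)
      have kact: "act k x = act h (act (inv\<^bsub>G\<^esub> g) x)" for x
        using gact h gS grp unfolding k_def group_act_def by (simp add: group.inv_closed)
      define e where "e = (\<lambda>t. act k (c0 t))"
      have "e \<in> FS A" unfolding FS_def
      proof (intro CollectI conjI)
        show "generalized_geodesic e" unfolding e_def by (rule gg_translate[OF isom k gg])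
        show "range e \<subseteq> A" unfolding e_def kact using gA0 h(2) by blast
      qed
      moreover have "c0 = (\<lambda>t. act (inv\<^bsub>G\<^esub> k) (e t))"
        unfolding e_def using act_cancel[OF grp gact k] by simp
      moreover have "inv\<^bsub>G\<^esub> k \<in> carrier G" using k grp by (simp add: group.inv_closed)
      ultimately show "c0 \<in> orbit_set G act (FS A)" unfolding orbit_set_def by blast
    qed
  qed
qed

end
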